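(* In the two-parallel-path setting with the linear decision rule, suppose the inputs $f_s(t),b_d(t)$ are positive and non-decreasing in $t$, all initial pheromone levels are positive, and the initial flows at vertices other than $s,d$ satisfy $f_v(0)\le f_s(0)$, $b_v(0)\le b_d(0)$. Then for every edge $(u,v)\in E$ and every integer $t\ge0$ with $$t\ \ge\ T_1:=\max_{(u,v)\in E}\frac{\log\!\big(p_{uv}(0)/(f_s(0)+b_d(0))\big)}{\log(1/\delta)},$$ we have $p_{uv}(t)\le\dfrac{2\,(f_s(t)+b_d(t))}{1-\delta}$.
   Context: Model (linear decision rule). Directed graph $G=(V,E)$, source $s$, destination $d$, discrete time; pheromone $p_{uv}(t)$, forward flows $f_v(t)$, backward flows $b_v(t)$; leakages $l_v\in[0,1]$; decay $\delta\in(0,1)$; exogenous inputs $f_s(t),b_d(t)$. Edge flows: $f_{uv}(t)=f_u(t)p_{uv}(t)/\sum_{z:(u,z)\in E}p_{uz}(t)$, $b_{uv}(t)=b_v(t)p_{uv}(t)/\sum_{z:(z,v)\in E}p_{zv}(t)$ (at a vertex with a single outgoing, resp. incoming, edge the whole flow goes along it). Updates: $f_v(t+1)=(1-l_v)\sum_{z:(z,v)\in E}f_{zv}(t)$ for $v\neq s$, $b_u(t+1)=(1-l_u)\sum_{z:(u,z)\in E}b_{uz}(t)$ for $u\ne d$, $p_{uv}(t+1)=\delta(p_{uv}(t)+f_{uv}(t)+b_{uv}(t))$. Two parallel paths: $G$ is the union of directed paths $P_1,P_2$ from $s$ to $d$ sharing only $s,d$. *)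

theory Defs
  imports Complex_Main
begin

definition path_edges :: "'a list \<Rightarrow> ('a \<times> 'a) set" where
  "path_edges P = set (zip P (tl P))"

definition two_parallel_paths ::
  "'a list \<Rightarrow> 'a list \<Rightarrow> 'a \<Rightarrow> 'a \<Rightarrow> ('a \<times> 'a) set \<Rightarrow> bool" where
  "two_parallel_paths P1 P2 s d E \<longleftrightarrow>
     s \<noteq> d \<and> P1 \<noteq> P2 \<and>
     length P1 \<ge> 2 \<and> length P2 \<ge> 2 \<and>
     distinct P1 \<and> distinct P2 \<and>
     hd P1 = s \<and> last P1 = d \<and> hd P2 = s \<and> last P2 = d \<and>
     set P1 \<inter> set P2 = {s, d} \<and>
     E = path_edges P1 \<union> path_edges P2"

definition vertices :: "('a \<times> 'a) set \<Rightarrow> 'a set" where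
  "vertices E = fst ` E \<union> snd ` E"

definition fwd_edge_flow ::
  "('a \<times> 'a) set \<Rightarrow> (nat \<Rightarrow> 'a \<times> 'a \<Rightarrow> real) \<Rightarrow> (nat \<Rightarrow> 'a \<Rightarrow> real) \<Rightarrow> nat \<Rightarrow> 'a \<Rightarrow> 'a \<Rightarrow> real" where
  "fwd_edge_flow E p f t u v =
     (if card {z. (u, z) \<in> E} = 1 then f t u
      else f t u * p t (u, v) / (\<Sum>z\<in>{z. (u, z) \<in> E}. p t (u, z)))"

definition bwd_edge_flow ::
  "('a \<times> 'a) set \<Rightarrow> (nat \<Rightarrow> 'a \<times> 'a \<Rightarrow> real) \<Rightarrow> (nat \<Rightarrow> 'a \<Rightarrow> real) \<Rightarrow> nat \<Rightarrow> 'a \<Rightarrow> 'a \<Rightarrow> real" where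
  "bwd_edge_flow E p b t u v =
     (if card {z. (z, v) \<in> E} = 1 then b t v
      else b t v * p t (u, v) / (\<Sum>z\<in>{z. (z, v) \<in> E}. p t (z, v)))"

definition model_dynamics ::
  "('a \<times> 'a) set \<Rightarrow> 'a \<Rightarrow> 'a \<Rightarrow> ('a \<Rightarrow> real) \<Rightarrow> real \<Rightarrow>
   (nat \<Rightarrow> 'a \<times> 'a \<Rightarrow> real) \<Rightarrow> (nat \<Rightarrow> 'a \<Rightarrow> real) \<Rightarrow> (nat \<Rightarrow> 'a \<Rightarrow> real) \<Rightarrow> bool" where
  "model_dynamics E s d l \<delta> p f b \<longleftrightarrow>
     (\<forall>t. \<forall>v\<in>vertices E - {s}.
        f (Suc t) v = (1 - l v) * (\<Sum>z\<in>{z. (z, v) \<in> E}. fwd_edge_flow E p f t z v)) \<and>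
     (\<forall>t. \<forall>u\<in>vertices E - {d}.
        b (Suc t) u = (1 - l u) * (\<Sum>z\<in>{z. (u, z) \<in> E}. bwd_edge_flow E p b t u z)) \<and>
     (\<forall>t. \<forall>(u, v)\<in>E.
        p (Suc t) (u, v) = \<delta> * (p t (u, v) + fwd_edge_flow E p f t u v + bwd_edge_flow E p b t u v))"

end

theory Submission
  imports Defs
begin

lemma pe_in_uniq:
  assumes "distinct P" "(a, v) \<in> path_edges P" "(a', v) \<in> path_edges P"
  shows "a = a'"
proof -
  from assms(2) obtain n where n: "P ! n = a" "tl P ! n = v" "n < length P" "n < length (tl P)"
    unfolding path_edges_def in_set_zip by auto
  from assms(3) obtain m where m: "P ! m = a'" "tl P ! m = v" "m < length P" "m < length (tl P)"
    unfolding path_edges_def in_set_zip by auto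
  have "P ! Suc n = P ! Suc m" using n m by (simp add: nth_tl)
  hence "Suc n = Suc m" using nth_eq_iff_index_eq[OF assms(1), of "Suc n" "Suc m"] n m by simp
  thus ?thesis using n m by simp
qed

lemma pe_out_uniq:
  assumes "distinct P" "(u, a) \<in> path_edges P" "(u, a') \<in> path_edges P"
  shows "a = a'"
proof -
  from assms(2) obtain n where n: "P ! n = u" "tl P ! n = a" "n < length P" "n < length (tl P)"
    unfolding path_edges_def in_set_zip by auto
  from assms(3) obtain m where m: "P ! m = u" "tl P ! m = a'" "m < length P" "m < length (tl P)"
    unfolding path_edges_def in_set_zip by auto
  have "n = m" using nth_eq_iff_index_eq[OF assms(1), of n m] n m by simp
  thus ?thesis using n m by simp
qed

lemma pe_props:
  assumes "distinct P" "P \<noteq> []" "(a, v) \<in> path_edges P"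
  shows "a \<in> set P" "v \<in> set P" "v \<noteq> hd P" "a \<noteq> last P"
proof -
  from assms(3) obtain n where n: "P ! n = a" "tl P ! n = v" "n < length P" "n < length (tl P)"
    unfolding path_edges_def in_set_zip by auto
  have v: "v = P ! Suc n" using n by (simp add: nth_tl)
  show "a \<in> set P" using n by auto
  show "v \<in> set P" using n v by auto
  show "v \<noteq> hd P"
  proof
    assume "v = hd P"
    hence "P ! Suc n = P ! 0" using v assms(2) by (simp add: hd_conv_nth)
    moreover have "Suc n < length P" using n(4) by simp
    ultimately show False using nth_eq_iff_index_eq[OF assms(1), of "Suc n" 0] assms(2) by simp
  qed
  show "a \<noteq> last P"
  proof
    assume "a = last P"
    hence "P ! n = P ! (length P - 1)" using n assms(2) by (simp add: last_conv_nth)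
    thus False using nth_eq_iff_index_eq[OF assms(1), of n "length P - 1"] n by simp
  qed
qed

lemma frac_bound:
  fixes g :: "'b \<Rightarrow> real"
  assumes "finite A" "v \<in> A" "\<forall>z\<in>A. 0 < g z" "0 \<le> c"
  shows "0 \<le> c * g v / sum g A \<and> c * g v / sum g A \<le> c"
proof -
  have le: "g v \<le> sum g A"
    using assms by (intro member_le_sum) auto
  have pos: "0 < sum g A" using assms(2,3) le by (meson less_le_trans)
  have "c * g v \<le> c * sum g A" using le assms(4) by (rule mult_left_mono)
  thus ?thesis using pos assms by (auto simp: divide_le_eq)
qed

theorem mainTheorem12:
  fixes P1 P2 :: "'a list" and s d :: 'a and E :: "('a \<times> 'a) set"
    and l :: "'a \<Rightarrow> real" and \<delta> :: real
    and p :: "nat \<Rightarrow> 'a \<times> 'a \<Rightarrow> real" and f b :: "nat \<Rightarrow> 'a \<Rightarrow> real"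
    and t :: nat and u v :: 'a
  assumes G: "two_parallel_paths P1 P2 s d E"
    and leak: "\<And>x. x \<in> vertices E \<Longrightarrow> 0 \<le> l x \<and> l x \<le> 1"
    and delta: "0 < \<delta>" "\<delta> < 1"
    and dyn: "model_dynamics E s d l \<delta> p f b"
    and fs_pos: "\<And>\<tau>. 0 < f \<tau> s" and fs_mono: "mono (\<lambda>\<tau>. f \<tau> s)"
    and bd_pos: "\<And>\<tau>. 0 < b \<tau> d" and bd_mono: "mono (\<lambda>\<tau>. b \<tau> d)"
    and p0_pos: "\<And>e. e \<in> E \<Longrightarrow> 0 < p 0 e"
    and f0: "\<And>x. x \<in> vertices E - {s, d} \<Longrightarrow> 0 \<le> f 0 x \<and> f 0 x \<le> f 0 s"
    and b0: "\<And>x. x \<in> vertices E - {s, d} \<Longrightarrow> 0 \<le> b 0 x \<and> b 0 x \<le> b 0 d"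
    and edge: "(u, v) \<in> E"
    and T1: "real t \<ge> Max ((\<lambda>e. ln (p 0 e / (f 0 s + b 0 d)) / ln (1 / \<delta>)) ` E)"
  shows "p t (u, v) \<le> 2 * (f t s + b t d) / (1 - \<delta>)"
proof -
  define V where "V = vertices E"
  note Gd = G[unfolded two_parallel_paths_def]
  have E: "E = path_edges P1 \<union> path_edges P2" using Gd by blast
  have sd: "s \<noteq> d" using Gd by blast
  have ne1: "P1 \<noteq> []" and ne2: "P2 \<noteq> []" using Gd by auto
  have dis1: "distinct P1" and dis2: "distinct P2" using Gd by auto
  have finE: "finite E" unfolding E path_edges_def by auto
  have fin_out: "\<And>u. finite {z. (u, z) \<in> E}"
    by (rule finite_subset[of _ "snd ` E"]) (force, simp add: finE)
  have fin_in: "\<And>v. finite {z. (z, v) \<in> E}"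
    by (rule finite_subset[of _ "fst ` E"]) (force, simp add: finE)
  have edV: "\<And>a c. (a, c) \<in> E \<Longrightarrow> a \<in> V \<and> c \<in> V"
    unfolding V_def vertices_def by force
  have hd1: "hd P1 = s" and hd2: "hd P2 = s" and last1: "last P1 = d" and last2: "last P2 = d"
    and inter: "set P1 \<inter> set P2 = {s, d}" using Gd by auto
  have nod: "\<And>a c. (a, c) \<in> E \<Longrightarrow> a \<noteq> d"
  proof -
    fix a c assume "(a, c) \<in> E"
    hence "(a, c) \<in> path_edges P1 \<or> (a, c) \<in> path_edges P2" using E by simp
    thus "a \<noteq> d" using pe_props(4)[OF dis1 ne1, of a c] pe_props(4)[OF dis2 ne2, of a c] last1 last2 by auto
  qed
  have nos: "\<And>a c. (a, c) \<in> E \<Longrightarrow> c \<noteq> s"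
  proof -
    fix a c assume "(a, c) \<in> E"
    hence "(a, c) \<in> path_edges P1 \<or> (a, c) \<in> path_edges P2" using E by simp
    thus "c \<noteq> s" using pe_props(3)[OF dis1 ne1, of a c] pe_props(3)[OF dis2 ne2, of a c] hd1 hd2 by auto
  qed
  have in_uniq: "\<And>z z' x. x \<noteq> d \<Longrightarrow> (z, x) \<in> E \<Longrightarrow> (z', x) \<in> E \<Longrightarrow> z = z'"
  proof -
    fix z z' x assume xd: "x \<noteq> d" and e1: "(z, x) \<in> E" and e2: "(z', x) \<in> E"
    have xs: "x \<noteq> s" using nos e1 by blast
    have cross: False if "(z, x) \<in> path_edges P1" "(z', x) \<in> path_edges P2" for z z'
    proof -
      have "x \<in> set P1" "x \<in> set P2"
        using pe_props(2)[OF dis1 ne1 that(1)] pe_props(2)[OF dis2 ne2 that(2)] by auto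
      thus False using inter xd xs by blast
    qed
    have "(z, x) \<in> path_edges P1 \<or> (z, x) \<in> path_edges P2" "(z', x) \<in> path_edges P1 \<or> (z', x) \<in> path_edges P2"
      using e1 e2 E by auto
    thus "z = z'" using cross[of z z'] cross[of z' z] pe_in_uniq[OF dis1, of z x z'] pe_in_uniq[OF dis2, of z x z'] by blast
  qed
  have out_uniq: "\<And>z z' x. x \<noteq> s \<Longrightarrow> (x, z) \<in> E \<Longrightarrow> (x, z') \<in> E \<Longrightarrow> z = z'"
  proof -
    fix z z' x assume xs: "x \<noteq> s" and e1: "(x, z) \<in> E" and e2: "(x, z') \<in> E"
    have xd: "x \<noteq> d" using nod e1 by blast
    have cross: False if "(x, z) \<in> path_edges P1" "(x, z') \<in> path_edges P2" for z z'
    proof -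
      have "x \<in> set P1" "x \<in> set P2"
        using pe_props(1)[OF dis1 ne1 that(1)] pe_props(1)[OF dis2 ne2 that(2)] by auto
      thus False using inter xd xs by blast
    qed
    have "(x, z) \<in> path_edges P1 \<or> (x, z) \<in> path_edges P2" "(x, z') \<in> path_edges P1 \<or> (x, z') \<in> path_edges P2"
      using e1 e2 E by auto
    thus "z = z'" using cross[of z z'] cross[of z' z] pe_out_uniq[OF dis1, of x z z'] pe_out_uniq[OF dis2, of x z z'] by blast
  qed
  have dynf: "\<And>t x. x \<in> V - {s} \<Longrightarrow>
        f (Suc t) x = (1 - l x) * (\<Sum>z\<in>{z. (z, x) \<in> E}. fwd_edge_flow E p f t z x)"
    using dyn unfolding model_dynamics_def V_def by blast
  have dynb: "\<And>t x. x \<in> V - {d} \<Longrightarrow>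
        b (Suc t) x = (1 - l x) * (\<Sum>z\<in>{z. (x, z) \<in> E}. bwd_edge_flow E p b t x z)"
    using dyn unfolding model_dynamics_def V_def by blast
  have dynp: "\<And>t a c. (a, c) \<in> E \<Longrightarrow>
        p (Suc t) (a, c) = \<delta> * (p t (a, c) + fwd_edge_flow E p f t a c + bwd_edge_flow E p b t a c)"
    using dyn unfolding model_dynamics_def by blast
  have fmono: "f t s \<le> f (Suc t) s" for t using fs_mono by (simp add: mono_def)
  have bmono: "b t d \<le> b (Suc t) d" for t using bd_mono by (simp add: mono_def)
  have lk: "\<And>x. x \<in> V \<Longrightarrow> 0 \<le> 1 - l x \<and> 1 - l x \<le> 1" using leak unfolding V_def by force

  define Inv where "Inv t \<longleftrightarrow> (\<forall>e\<in>E. 0 < p t e) \<and>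
     (\<forall>x\<in>V-{d}. 0 \<le> f t x \<and> f t x \<le> f t s) \<and> (\<forall>x\<in>V-{s}. 0 \<le> b t x \<and> b t x \<le> b t d)" for t

  have flows: "0 \<le> fwd_edge_flow E p f t a c \<and> fwd_edge_flow E p f t a c \<le> f t s \<and>
               0 \<le> bwd_edge_flow E p b t a c \<and> bwd_edge_flow E p b t a c \<le> b t d"
    if I: "Inv t" and e: "(a, c) \<in> E" for t a c
  proof -
    have pp: "\<forall>e\<in>E. 0 < p t e" and ff: "0 \<le> f t a \<and> f t a \<le> f t s"
      and bb: "0 \<le> b t c \<and> b t c \<le> b t d"
      using I edV[OF e] nod[OF e] nos[OF e] unfolding Inv_def by auto
    have F: "0 \<le> fwd_edge_flow E p f t a c \<and> fwd_edge_flow E p f t a c \<le> f t a"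
    proof (cases "card {z. (a, z) \<in> E} = 1")
      case True thus ?thesis using ff by (simp add: fwd_edge_flow_def)
    next
      case False
      have "0 \<le> f t a * p t (a, c) / (\<Sum>z\<in>{z. (a, z) \<in> E}. p t (a, z)) \<and>
            f t a * p t (a, c) / (\<Sum>z\<in>{z. (a, z) \<in> E}. p t (a, z)) \<le> f t a"
        using frac_bound[of "{z. (a, z) \<in> E}" c "\<lambda>z. p t (a, z)" "f t a"] fin_out e pp ff by auto
      thus ?thesis using False by (simp add: fwd_edge_flow_def)
    qed
    have B: "0 \<le> bwd_edge_flow E p b t a c \<and> bwd_edge_flow E p b t a c \<le> b t c"
    proof (cases "card {z. (z, c) \<in> E} = 1")
      case True thus ?thesis using bb by (simp add: bwd_edge_flow_def)
    next
      case False
      have "0 \<le> b t c * p t (a, c) / (\<Sum>z\<in>{z. (z, c) \<in> E}. p t (z, c)) \<and>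
            b t c * p t (a, c) / (\<Sum>z\<in>{z. (z, c) \<in> E}. p t (z, c)) \<le> b t c"
        using frac_bound[of "{z. (z, c) \<in> E}" a "\<lambda>z. p t (z, c)" "b t c"] fin_in e pp bb by auto
      thus ?thesis using False by (simp add: bwd_edge_flow_def)
    qed
    show ?thesis using F B ff bb by linarith
  qed

  have sub: "S = {} \<or> (\<exists>z. S = {z})" if "\<forall>z\<in>S. \<forall>z'\<in>S. z = z'" for S :: "'a set"
    using that by blast

  have inv: "Inv t" for t
  proof (induction t)
    case 0
    have A: "\<forall>x\<in>V-{d}. 0 \<le> f 0 x \<and> f 0 x \<le> f 0 s"
    proof
      fix x assume x: "x \<in> V - {d}"
      show "0 \<le> f 0 x \<and> f 0 x \<le> f 0 s"
      proof (cases "x = s")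
        case True thus ?thesis using fs_pos[of 0] by simp
      next
        case False thus ?thesis using f0[of x] x unfolding V_def by blast
      qed
    qed
    have B: "\<forall>x\<in>V-{s}. 0 \<le> b 0 x \<and> b 0 x \<le> b 0 d"
    proof
      fix x assume x: "x \<in> V - {s}"
      show "0 \<le> b 0 x \<and> b 0 x \<le> b 0 d"
      proof (cases "x = d")
        case True thus ?thesis using bd_pos[of 0] by simp
      next
        case False thus ?thesis using b0[of x] x unfolding V_def by blast
      qed
    qed
    show ?case unfolding Inv_def using A B p0_pos by blast
  next
    case (Suc t)
    note I = Suc.IH
    have P: "\<forall>e\<in>E. 0 < p (Suc t) e"
    proof
      fix e assume e: "e \<in> E"
      obtain a c where ac: "e = (a, c)" by force
      have "0 < p t e" using I e unfolding Inv_def by auto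
      thus "0 < p (Suc t) e" using dynp[of a c t] flows[OF I, of a c] e ac delta by simp
    qed
    have Fv: "\<forall>x\<in>V-{d}. 0 \<le> f (Suc t) x \<and> f (Suc t) x \<le> f (Suc t) s"
    proof
      fix x assume x: "x \<in> V - {d}"
      show "0 \<le> f (Suc t) x \<and> f (Suc t) x \<le> f (Suc t) s"
      proof (cases "x = s")
        case True thus ?thesis using fs_pos[of "Suc t"] by simp
      next
        case False
        have eq: "f (Suc t) x = (1 - l x) * (\<Sum>z\<in>{z. (z, x) \<in> E}. fwd_edge_flow E p f t z x)"
          using dynf x False by blast
        have ss: "0 \<le> (\<Sum>z\<in>{z. (z, x) \<in> E}. fwd_edge_flow E p f t z x) \<and>
                  (\<Sum>z\<in>{z. (z, x) \<in> E}. fwd_edge_flow E p f t z x) \<le> f t s"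
        proof -
          have "{z. (z, x) \<in> E} = {} \<or> (\<exists>z. {z. (z, x) \<in> E} = {z})"
            using in_uniq x by (intro sub) auto
          thus ?thesis
          proof
            assume "{z. (z, x) \<in> E} = {}" thus ?thesis using fs_pos[of t] by (simp add: less_imp_le)
          next
            assume "\<exists>z. {z. (z, x) \<in> E} = {z}"
            then obtain z where z: "{z. (z, x) \<in> E} = {z}" by blast
            hence "(z, x) \<in> E" by blast
            thus ?thesis using z flows[OF I, of z x] by simp
          qed
        qed
        have l: "0 \<le> 1 - l x \<and> 1 - l x \<le> 1" using lk x by blast
        have "(1 - l x) * (\<Sum>z\<in>{z. (z, x) \<in> E}. fwd_edge_flow E p f t z x)
              \<le> 1 * f t s" using l ss by (intro mult_mono) auto
        thus ?thesis using eq l ss fmono[of t] by simp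
      qed
    qed
    have Bv: "\<forall>x\<in>V-{s}. 0 \<le> b (Suc t) x \<and> b (Suc t) x \<le> b (Suc t) d"
    proof
      fix x assume x: "x \<in> V - {s}"
      show "0 \<le> b (Suc t) x \<and> b (Suc t) x \<le> b (Suc t) d"
      proof (cases "x = d")
        case True thus ?thesis using bd_pos[of "Suc t"] by simp
      next
        case False
        have eq: "b (Suc t) x = (1 - l x) * (\<Sum>z\<in>{z. (x, z) \<in> E}. bwd_edge_flow E p b t x z)"
          using dynb x False by blast
        have ss: "0 \<le> (\<Sum>z\<in>{z. (x, z) \<in> E}. bwd_edge_flow E p b t x z) \<and>
                  (\<Sum>z\<in>{z. (x, z) \<in> E}. bwd_edge_flow E p b t x z) \<le> b t d"
        proof -
          have "{z. (x, z) \<in> E} = {} \<or> (\<exists>z. {z. (x, z) \<in> E} = {z})"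
            using out_uniq x by (intro sub) auto
          thus ?thesis
          proof
            assume "{z. (x, z) \<in> E} = {}" thus ?thesis using bd_pos[of t] by (simp add: less_imp_le)
          next
            assume "\<exists>z. {z. (x, z) \<in> E} = {z}"
            then obtain z where z: "{z. (x, z) \<in> E} = {z}" by blast
            hence "(x, z) \<in> E" by blast
            thus ?thesis using z flows[OF I, of x z] by simp
          qed
        qed
        have l: "0 \<le> 1 - l x \<and> 1 - l x \<le> 1" using lk x by blast
        have "(1 - l x) * (\<Sum>z\<in>{z. (x, z) \<in> E}. bwd_edge_flow E p b t x z)
              \<le> 1 * b t d" using l ss by (intro mult_mono) auto
        thus ?thesis using eq l ss bmono[of t] by simp
      qed
    qed
    show ?case unfolding Inv_def using P Fv Bv by blast
  qed

  define c where "c t = f t s + b t d" for t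
  have cmono: "c t \<le> c (Suc t)" for t unfolding c_def using fmono bmono by (simp add: add_mono)
  have cmono': "c 0 \<le> c t" for t
    by (induction t) (auto intro: order_trans[OF _ cmono])
  have cpos: "0 < c t" for t unfolding c_def using fs_pos bd_pos by (simp add: add_pos_pos)

  have bound: "\<forall>e\<in>E. p t e \<le> \<delta> ^ t * p 0 e + c t * \<delta> / (1 - \<delta>)" for t
  proof (induction t)
    case 0
    show ?case using cpos[of 0] delta by auto
  next
    case (Suc t)
    show ?case
    proof
      fix e assume e: "e \<in> E"
      obtain a c' where ac: "e = (a, c')" by force
      have fl: "fwd_edge_flow E p f t a c' + bwd_edge_flow E p b t a c' \<le> c t"
        using flows[OF inv[of t], of a c'] e ac unfolding c_def by simp
      have ih: "p t e \<le> \<delta> ^ t * p 0 e + c t * \<delta> / (1 - \<delta>)" using Suc e by blast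
      have "p (Suc t) e = \<delta> * (p t e + fwd_edge_flow E p f t a c' + bwd_edge_flow E p b t a c')"
        using dynp[of a c' t] e ac by simp
      also have "\<dots> \<le> \<delta> * (\<delta> ^ t * p 0 e + c t * \<delta> / (1 - \<delta>) + c t)"
        using ih fl delta by (intro mult_left_mono) auto
      also have "\<dots> = \<delta> ^ Suc t * p 0 e + \<delta> * (c t / (1 - \<delta>))"
        using delta by (simp add: field_simps)
      also have "\<dots> \<le> \<delta> ^ Suc t * p 0 e + \<delta> * (c (Suc t) / (1 - \<delta>))"
        using delta cmono[of t] by (intro add_left_mono mult_left_mono divide_right_mono) auto
      finally show "p (Suc t) e \<le> \<delta> ^ Suc t * p 0 e + c (Suc t) * \<delta> / (1 - \<delta>)"
        by (simp add: field_simps)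
    qed
  qed

  have lnpos: "0 < ln (1 / \<delta>)" using delta by simp
  have "ln (p 0 (u, v) / c 0) / ln (1 / \<delta>) \<le> real t"
  proof -
    have "ln (p 0 (u, v) / c 0) / ln (1 / \<delta>)
          \<le> Max ((\<lambda>e. ln (p 0 e / (f 0 s + b 0 d)) / ln (1 / \<delta>)) ` E)"
      using finE edge unfolding c_def by (intro Max_ge) auto
    thus ?thesis using T1 by linarith
  qed
  hence "ln (p 0 (u, v) / c 0) \<le> real t * ln (1 / \<delta>)"
    using lnpos by (simp add: divide_le_eq)
  hence "ln (p 0 (u, v)) - ln (c 0) \<le> - (real t * ln \<delta>)"
    using p0_pos[OF edge] cpos[of 0] delta by (simp add: ln_div)
  hence "ln (\<delta> ^ t * p 0 (u, v)) \<le> ln (c 0)"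
    using p0_pos[OF edge] delta by (simp add: ln_mult ln_realpow)
  hence small: "\<delta> ^ t * p 0 (u, v) \<le> c 0"
    using p0_pos[OF edge] delta cpos[of 0] by simp
  have "p t (u, v) \<le> \<delta> ^ t * p 0 (u, v) + c t * \<delta> / (1 - \<delta>)" using bound edge by blast
  also have "\<dots> \<le> c t + c t * \<delta> / (1 - \<delta>)" using small cmono'[of t] by linarith
  also have "\<dots> = c t / (1 - \<delta>)" using delta by (simp add: field_simps)
  also have "\<dots> \<le> 2 * c t / (1 - \<delta>)" using delta cpos[of t] by (simp add: divide_right_mono)
  finally show ?thesis unfolding c_def .
qed

end
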